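(* Let $j$ be a positive integer and for $w>1$ and a d.f. $F$ on $\mathbb{R}$ define the d.f. $$H_w(x)=\frac{F(x)}{\{w-(w-1)F(x)^j\}^{1/j}},\quad x\in\mathbb{R}.$$ Let $u,v>1$, let $N\sim$ Harris$(u,j)$ and $M\sim$ Harris$(v,j)$, let $X_1,X_2,\dots$ be i.i.d. with d.f. $F$, with $N,M,(X_i)$ mutually independent, and let $V=\max(X_1,\dots,X_N)$, so $P\{V\le x\}=H_u(x)$. If $V_1,V_2,\dots$ are i.i.d. copies of $V$, independent of $M$, then $P\{\max(V_1,\dots,V_M)\le x\}=H_{uv}(x)$ for all $x$. Hence the family $\{H_w:w>1\}$ is closed under taking maxima of Harris$(v,j)$-many i.i.d. copies (it is $M$-max stable).
   Context: For an integer $k>0$ and $a>1$, the Harris$(a,k)$ law is the distribution on the positive integers with PGF $\dfrac{s}{\{a-(a-1)s^k\}^{1/k}}$. *)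

theory Defs
  imports "HOL-Probability.Probability"
begin

definition harris_pgf :: "real \<Rightarrow> nat \<Rightarrow> real \<Rightarrow> real" where
  "harris_pgf a k s = s / (a - (a - 1) * s ^ k) powr (1 / real k)"

definition is_Harris :: "'a measure \<Rightarrow> ('a \<Rightarrow> nat) \<Rightarrow> real \<Rightarrow> nat \<Rightarrow> bool" where
  "is_Harris P N a k \<longleftrightarrow>
     N \<in> measurable P (count_space UNIV) \<and>
     (\<forall>s\<in>{0..1}. (\<integral>\<omega>. s ^ N \<omega> \<partial>P) = harris_pgf a k s)"

definition H_df :: "nat \<Rightarrow> (real \<Rightarrow> real) \<Rightarrow> real \<Rightarrow> real \<Rightarrow> real" where
  "H_df j F w x = F x / (w - (w - 1) * F x ^ j) powr (1 / real j)"

end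

theory Submission
  imports Defs
begin

lemma pgf_sums:
  assumes ps: "prob_space P" and Nm: "N \<in> measurable P (count_space UNIV)"
    and g: "0 \<le> g" "g \<le> (1::real)"
  shows "(\<lambda>n. measure P {\<omega>\<in>space P. N \<omega> = n} * g^n) sums (\<integral>\<omega>. g ^ N \<omega> \<partial>P)"
proof -
  interpret prob_space P by fact
  have [measurable]: "N \<in> measurable P (count_space UNIV)" by fact
  define B where "B n = {\<omega>\<in>space P. N \<omega> = n}" for n
  have Bm[measurable]: "B n \<in> sets P" for n unfolding B_def by measurable
  let ?f = "\<lambda>n \<omega>. g^n * indicator (B n) \<omega>"
  have int: "integrable P (?f n)" for n
    using Bm by (intro integrable_mult_right integrable_real_indicator) (auto simp: less_top[symmetric])
  have intf: "integral\<^sup>L P (?f n) = measure P (B n) * g^n" for n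
    using Bm by simp
  have pt: "(\<lambda>n. ?f n \<omega>) sums g ^ N \<omega>" if "\<omega> \<in> space P" for \<omega>
  proof -
    have "(\<lambda>n. ?f n \<omega>) = (\<lambda>n. if n = N \<omega> then g^n else 0)"
      using that by (auto simp: B_def indicator_def)
    then show ?thesis using sums_single[of "N \<omega>" "\<lambda>n. g^n"] by simp
  qed
  have disj: "disjoint_family B" unfolding disjoint_family_on_def B_def by auto
  have sB: "summable (\<lambda>n. measure P (B n))"
    using finite_measure_UNION[of B] disj Bm sums_summable by blast
  have s2: "summable (\<lambda>n. \<integral>\<omega>. norm (?f n \<omega>) \<partial>P)"
  proof (rule summable_comparison_test[OF _ sB])
    show "\<exists>M. \<forall>n\<ge>M. norm (\<integral>\<omega>. norm (?f n \<omega>) \<partial>P) \<le> measure P (B n)"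
    proof (intro exI allI impI)
      fix n :: nat
      have "(\<integral>\<omega>. norm (?f n \<omega>) \<partial>P) = integral\<^sup>L P (?f n)"
        using g by (intro Bochner_Integration.integral_cong) (auto simp: indicator_def)
      also have "\<dots> = measure P (B n) * g^n" by (rule intf)
      finally show "norm (\<integral>\<omega>. norm (?f n \<omega>) \<partial>P) \<le> measure P (B n)"
        using g by (simp add: mult_left_le_one_le power_le_one)
    qed
  qed
  have s1: "AE \<omega> in P. summable (\<lambda>n. norm (?f n \<omega>))"
  proof (rule AE_I2)
    fix \<omega> assume "\<omega> \<in> space P"
    then have "summable (\<lambda>n. ?f n \<omega>)" using pt sums_summable by blast
    moreover have "(\<lambda>n. norm (?f n \<omega>)) = (\<lambda>n. ?f n \<omega>)" using g by (auto simp: indicator_def)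
    ultimately show "summable (\<lambda>n. norm (?f n \<omega>))" by simp
  qed
  have "(\<lambda>n. integral\<^sup>L P (?f n)) sums (\<integral>\<omega>. (\<Sum>n. ?f n \<omega>) \<partial>P)"
    by (rule sums_integral[OF int s1 s2])
  moreover have "(\<integral>\<omega>. (\<Sum>n. ?f n \<omega>) \<partial>P) = (\<integral>\<omega>. g ^ N \<omega> \<partial>P)"
    using pt by (intro Bochner_Integration.integral_cong) (auto simp: sums_iff)
  ultimately show ?thesis using intf by (simp add: B_def mult.commute)
qed

lemma max_meas:
  fixes N :: "'a \<Rightarrow> nat" and Y :: "nat \<Rightarrow> 'a \<Rightarrow> real"
  assumes Nm: "N \<in> measurable P (count_space UNIV)"
    and Ym: "\<And>k. k \<ge> 1 \<Longrightarrow> Y k \<in> borel_measurable P"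
  shows "(\<lambda>\<omega>. Max ((\<lambda>i. Y i \<omega>) ` {1..N \<omega>}) :: real) \<in> borel_measurable P"
proof (rule measurable_compose_countable[where f="\<lambda>n \<omega>. Max ((\<lambda>i. Y i \<omega>) ` {1..n})", OF _ Nm])
  fix n :: nat
  show "(\<lambda>\<omega>. Max ((\<lambda>i. Y i \<omega>) ` {1..n})) \<in> borel_measurable P"
    by (rule borel_measurable_Max) (auto intro: Ym)
qed

lemma max_random:
  assumes ps: "prob_space P"
  and ind: "prob_space.indep_vars P (\<lambda>_. borel) Z I"
  and aI: "a \<in> I" and bI: "\<And>k. k \<ge> 1 \<Longrightarrow> b k \<in> I" and binj: "inj_on b {1..}"
  and ab: "\<And>k. k \<ge> 1 \<Longrightarrow> b k \<noteq> a"
  and ZN: "Z a = (\<lambda>\<omega>. real (N \<omega>))" and ZY: "\<And>k. k \<ge> 1 \<Longrightarrow> Z (b k) = Y k"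
  and Nm: "N \<in> measurable P (count_space UNIV)"
  and G: "\<And>k. k \<ge> 1 \<Longrightarrow> measure P {\<omega>\<in>space P. Y k \<omega> \<le> x} = g"
  and N0: "measure P {\<omega>\<in>space P. N \<omega> = 0} = 0"
  and g: "0 \<le> g" "g \<le> 1"
  shows "measure P {\<omega>\<in>space P. Max ((\<lambda>i. Y i \<omega>) ` {1..N \<omega>}) \<le> x} = (\<integral>\<omega>. g ^ N \<omega> \<partial>P)"
proof -
  interpret prob_space P by fact
  have [measurable]: "N \<in> measurable P (count_space UNIV)" by fact
  have Ym: "Y k \<in> borel_measurable P" if "k \<ge> 1" for k
    using ind bI[OF that] ZY[OF that] unfolding indep_vars_def2 by auto
  have YSm[measurable]: "Y (Suc k) \<in> borel_measurable P" for k using Ym by simp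
  have Mm[measurable]: "(\<lambda>\<omega>. Max ((\<lambda>i. Y i \<omega>) ` {1..N \<omega>})) \<in> borel_measurable P"
    by (rule max_meas[OF Nm Ym])
  define S where "S = {\<omega>\<in>space P. Max ((\<lambda>i. Y i \<omega>) ` {1..N \<omega>}) \<le> x}"
  have Sm: "S \<in> events" unfolding S_def by measurable
  define Z0 where "Z0 = {\<omega>\<in>space P. N \<omega> = 0}"
  have Z0m: "Z0 \<in> events" unfolding Z0_def by measurable
  have Z0n: "Z0 \<in> null_sets P" using Z0m N0 by (simp add: Z0_def null_sets_def emeasure_eq_measure)
  define A where "A n = {\<omega>\<in>space P. N \<omega> = n \<and> 1 \<le> n \<and> (\<forall>i<n. Y (Suc i) \<omega> \<le> x)}" for n
  have Am: "A n \<in> events" for n unfolding A_def by measurable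
  have disj: "disjoint_family A" unfolding disjoint_family_on_def A_def by auto
  have SA: "S - Z0 = (\<Union>n. A n)"
  proof (intro set_eqI iffI)
    fix \<omega> assume "\<omega> \<in> S - Z0"
    then have "\<omega> \<in> space P" "N \<omega> \<ge> 1" "Max ((\<lambda>i. Y i \<omega>) ` {1..N \<omega>}) \<le> x"
      by (auto simp: S_def Z0_def)
    then have "\<forall>i<N \<omega>. Y (Suc i) \<omega> \<le> x" by (auto simp: Max_le_iff)
    then show "\<omega> \<in> (\<Union>n. A n)" using \<open>\<omega> \<in> space P\<close> \<open>N \<omega> \<ge> 1\<close> by (auto simp: A_def)
  next
    fix \<omega> assume "\<omega> \<in> (\<Union>n. A n)"
    then have "\<omega> \<in> space P" "N \<omega> \<ge> 1" "\<forall>i<N \<omega>. Y (Suc i) \<omega> \<le> x"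
      by (auto simp: A_def)
    then have "Max ((\<lambda>i. Y i \<omega>) ` {1..N \<omega>}) \<le> x"
      by (auto simp: Max_le_iff) (metis Suc_le_D Suc_le_eq le_SucE)
    then show "\<omega> \<in> S - Z0" using \<open>\<omega> \<in> space P\<close> \<open>N \<omega> \<ge> 1\<close> by (auto simp: S_def Z0_def)
  qed
  have pA: "prob (A n) = prob {\<omega>\<in>space P. N \<omega> = n} * g ^ n" for n
  proof (cases "n = 0")
    case True
    then show ?thesis using N0 by (simp add: A_def)
  next
    case False
    define J where "J = insert a (b ` {1..n})"
    define C where "C i = (if i = a then {real n} else {..x})" for i
    have JI: "J \<subseteq> I" using aI bI by (auto simp: J_def)
    have "prob (\<Inter>i\<in>J. Z i -` C i \<inter> space P) = (\<Prod>i\<in>J. prob (Z i -` C i \<inter> space P))"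
      by (rule indep_varsD[OF ind]) (use aI bI in \<open>auto simp: J_def C_def JI\<close>)
    moreover have "(\<Inter>i\<in>J. Z i -` C i \<inter> space P) = A n"
    proof -
      have "(\<Inter>i\<in>J. Z i -` C i \<inter> space P) = (Z a -` C a \<inter> space P) \<inter> (\<Inter>k\<in>{1..n}. Z (b k) -` C (b k) \<inter> space P)"
        by (auto simp: J_def)
      also have "\<dots> = A n"
      proof -
        have "Z (b k) -` C (b k) \<inter> space P = {\<omega>\<in>space P. Y k \<omega> \<le> x}" if "k \<in> {1..n}" for k
          using that ab[of k] ZY[of k] by (auto simp: C_def)
        then have e: "(\<Inter>k\<in>{1..n}. Z (b k) -` C (b k) \<inter> space P) = (\<Inter>k\<in>{1..n}. {\<omega>\<in>space P. Y k \<omega> \<le> x})"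
          by (intro INF_cong) auto
        show ?thesis unfolding e using False
          apply (auto simp: C_def A_def ZN)
          by (metis Suc_le_D Suc_le_eq less_Suc_eq_le)
      qed
      finally show ?thesis .
    qed
    moreover have "(\<Prod>i\<in>J. prob (Z i -` C i \<inter> space P)) = prob {\<omega>\<in>space P. N \<omega> = n} * g ^ n"
    proof -
      have "a \<notin> b ` {1..n}" using ab by force
      then have "(\<Prod>i\<in>J. prob (Z i -` C i \<inter> space P)) = prob (Z a -` C a \<inter> space P) * (\<Prod>i\<in>b ` {1..n}. prob (Z i -` C i \<inter> space P))"
        by (simp add: J_def)
      also have "(\<Prod>i\<in>b ` {1..n}. prob (Z i -` C i \<inter> space P)) = (\<Prod>k\<in>{1..n}. prob (Z (b k) -` C (b k) \<inter> space P))"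
        using prod.reindex[OF inj_on_subset[OF binj, of "{1..n}"], of "\<lambda>i. prob (Z i -` C i \<inter> space P)"] by auto
      also have "\<dots> = (\<Prod>k\<in>{1..n}. g)"
        by (rule prod.cong) (auto simp: C_def ab ZY G vimage_def Int_def conj_commute)
      also have "Z a -` C a \<inter> space P = {\<omega>\<in>space P. N \<omega> = n}"
        by (auto simp: C_def ZN)
      finally show ?thesis by simp
    qed
    ultimately show ?thesis by simp
  qed
  have "(\<lambda>n. prob (A n)) sums prob (\<Union>n. A n)"
    by (rule finite_measure_UNION) (use Am disj in auto)
  then have "(\<lambda>n. prob {\<omega>\<in>space P. N \<omega> = n} * g ^ n) sums prob S"
    using pA SA measure_Diff_null_set[OF Sm Z0n] by simp
  moreover have "(\<lambda>n. prob {\<omega>\<in>space P. N \<omega> = n} * g ^ n) sums (\<integral>\<omega>. g ^ N \<omega> \<partial>P)"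
    by (rule pgf_sums[OF ps Nm g])
  ultimately show ?thesis unfolding S_def using sums_unique2 by blast
qed

lemma harris_comp:
  fixes u v t :: real and j :: nat
  assumes j: "j > 0" and u: "u > 1" and v: "v > 1" and t: "0 \<le> t" "t \<le> 1"
  shows "(t / (u - (u-1)*t^j) powr (1/real j)) / (v - (v-1) * (t / (u - (u-1)*t^j) powr (1/real j))^j) powr (1/real j)
       = t / (u * v - (u * v-1)*t^j) powr (1/real j)"
proof -
  define D where "D = u - (u-1)*t^j"
  define E where "E = u * v - (u * v-1)*t^j"
  have tj: "t^j \<le> 1" "0 \<le> t^j" using t by (auto simp: power_le_one)
  have uv: "u * v > 1" using u v by (smt (verit) mult_less_cancel_left1)
  have "(u-1)*t^j \<le> (u-1)" using tj u by (simp add: mult_left_le)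
  then have D: "D \<ge> 1" unfolding D_def by simp
  have "(u * v-1)*t^j \<le> (u * v-1)" using tj uv by (simp add: mult_left_le)
  then have E: "E \<ge> 1" unfolding E_def by simp
  have pj: "(D powr (1/real j))^j = D" using D j by (simp add: powr_power)
  have h: "(t / D powr (1/real j))^j = t^j / D" by (simp add: power_divide pj)
  have vD: "v * D - (v-1)*t^j = E" by (simp add: D_def E_def algebra_simps)
  have "v - (v-1) * (t^j / D) = (v * D - (v-1)*t^j) / D" using D by (simp add: diff_divide_distrib)
  then have "v - (v-1) * (t^j / D) = E / D" using vD by simp
  then have "(v - (v-1) * (t / D powr (1/real j))^j) powr (1/real j) = E powr (1/real j) / D powr (1/real j)"
    using D E by (simp add: h powr_divide)
  then have "(t / D powr (1/real j)) / (v - (v-1) * (t / D powr (1/real j))^j) powr (1/real j) = t / E powr (1/real j)"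
    using D E by (simp add: field_simps)
  then show ?thesis by (simp add: D_def E_def)
qed

theorem proposition2p2:
  fixes P :: "'a measure"
    and j :: nat and u v :: real
    and F :: "real \<Rightarrow> real"
    and N Mv :: "'a \<Rightarrow> nat"
    and X V :: "nat \<Rightarrow> 'a \<Rightarrow> real"
  assumes "prob_space P"
    and "j > 0" and "u > 1" and "v > 1"
    and "is_Harris P N u j" and "is_Harris P Mv v j"
    and "\<And>i x. i \<ge> 1 \<Longrightarrow> measure P {\<omega> \<in> space P. X i \<omega> \<le> x} = F x"
    and "prob_space.indep_vars P (\<lambda>_. borel)
           (\<lambda>i \<omega>. case i of Inl k \<Rightarrow> X k \<omega> | Inr b \<Rightarrow> (if b then real (N \<omega>) else real (Mv \<omega>)))
           (Inl ` {1..} \<union> range Inr)"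
    and "prob_space.indep_vars P (\<lambda>_. borel)
           (\<lambda>i \<omega>. case i of None \<Rightarrow> real (Mv \<omega>) | Some k \<Rightarrow> V k \<omega>)
           (insert None (Some ` {1..}))"
    and "\<And>i. i \<ge> 1 \<Longrightarrow>
           distr P borel (V i) = distr P borel (\<lambda>\<omega>. Max ((\<lambda>i. X i \<omega>) ` {1..N \<omega>}))"
  shows "(\<forall>x. measure P {\<omega> \<in> space P. Max ((\<lambda>i. X i \<omega>) ` {1..N \<omega>}) \<le> x} = H_df j F u x)
       \<and> (\<forall>x. measure P {\<omega> \<in> space P. Max ((\<lambda>i. V i \<omega>) ` {1..Mv \<omega>}) \<le> x} = H_df j F (u * v) x)"
proof -
  interpret prob_space P by fact
  have ind1: "indep_vars (\<lambda>_. borel)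
           (\<lambda>i \<omega>. case i of Inl k \<Rightarrow> X k \<omega> | Inr b \<Rightarrow> (if b then real (N \<omega>) else real (Mv \<omega>)))
           (Inl ` {1..} \<union> range Inr)" using assms(8) by simp
  have ind2: "indep_vars (\<lambda>_. borel)
           (\<lambda>i \<omega>. case i of None \<Rightarrow> real (Mv \<omega>) | Some k \<Rightarrow> V k \<omega>)
           (insert None (Some ` {1..}))" using assms(9) by simp
  have Nm: "N \<in> measurable P (count_space UNIV)"
    and pgfN: "\<And>s. s \<in> {0..1} \<Longrightarrow> (\<integral>\<omega>. s ^ N \<omega> \<partial>P) = harris_pgf u j s"
    using assms(5) unfolding is_Harris_def by auto
  have Mm: "Mv \<in> measurable P (count_space UNIV)"
    and pgfM: "\<And>s. s \<in> {0..1} \<Longrightarrow> (\<integral>\<omega>. s ^ Mv \<omega> \<partial>P) = harris_pgf v j s"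
    using assms(6) unfolding is_Harris_def by auto
  have zero: "measure P {\<omega>\<in>space P. K \<omega> = 0} = 0"
    if Km: "K \<in> measurable P (count_space UNIV)"
    and pg: "(\<integral>\<omega>. (0::real) ^ K \<omega> \<partial>P) = harris_pgf w j 0" for K :: "'a \<Rightarrow> nat" and w
  proof -
    have [measurable]: "K \<in> measurable P (count_space UNIV)" by fact
    have "(\<integral>\<omega>. (0::real) ^ K \<omega> \<partial>P) = (\<integral>\<omega>. indicator {\<omega>\<in>space P. K \<omega> = 0} \<omega> \<partial>P)"
      by (intro Bochner_Integration.integral_cong) (auto simp: indicator_def)
    also have "\<dots> = measure P {\<omega>\<in>space P. K \<omega> = 0}"
    proof -
      have "{\<omega>\<in>space P. K \<omega> = 0} \<in> events" by measurable
      then show ?thesis by (simp add: less_top[symmetric])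
    qed
    finally show ?thesis using pg by (simp add: harris_pgf_def)
  qed
  have N0: "measure P {\<omega>\<in>space P. N \<omega> = 0} = 0" using zero[OF Nm pgfN] by simp
  have M0: "measure P {\<omega>\<in>space P. Mv \<omega> = 0} = 0" using zero[OF Mm pgfM] by simp
  have Xm: "X k \<in> borel_measurable P" if "k \<ge> 1" for k
    using ind1 that unfolding indep_vars_def2 by (auto dest!: bspec[where x="Inl k"])
  have Vm: "V k \<in> borel_measurable P" if "k \<ge> 1" for k
    using ind2 that unfolding indep_vars_def2 by (auto dest!: bspec[where x="Some k"])
  have part1: "measure P {\<omega> \<in> space P. Max ((\<lambda>i. X i \<omega>) ` {1..N \<omega>}) \<le> x} = H_df j F u x" for x
  proof -
    have F01: "0 \<le> F x" "F x \<le> 1" unfolding assms(7)[of 1 x, symmetric, simplified] by (simp_all add: prob_le_1)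
    have "measure P {\<omega> \<in> space P. Max ((\<lambda>i. X i \<omega>) ` {1..N \<omega>}) \<le> x} = (\<integral>\<omega>. F x ^ N \<omega> \<partial>P)"
      by (rule max_random[OF assms(1) ind1, where a="Inr True" and b=Inl])
         (use assms(7) F01 N0 Nm in \<open>auto simp: inj_on_def\<close>)
    also have "\<dots> = H_df j F u x" using pgfN[of "F x"] F01 by (simp add: harris_pgf_def H_df_def)
    finally show ?thesis .
  qed
  have Maxm: "(\<lambda>\<omega>. Max ((\<lambda>i. X i \<omega>) ` {1..N \<omega>})) \<in> borel_measurable P"
    by (rule max_meas[OF Nm Xm])
  have VG: "measure P {\<omega>\<in>space P. V k \<omega> \<le> x} = H_df j F u x" if "k \<ge> 1" for k x
  proof -
    have "measure P {\<omega>\<in>space P. V k \<omega> \<le> x} = measure (distr P borel (V k)) {..x}"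
      using Vm[OF that] by (subst measure_distr) (auto simp: vimage_def Int_def conj_commute)
    also have "\<dots> = measure (distr P borel (\<lambda>\<omega>. Max ((\<lambda>i. X i \<omega>) ` {1..N \<omega>}))) {..x}"
      using assms(10)[OF that] by simp
    also have "\<dots> = measure P {\<omega> \<in> space P. Max ((\<lambda>i. X i \<omega>) ` {1..N \<omega>}) \<le> x}"
      using Maxm by (subst measure_distr) (auto simp: vimage_def Int_def conj_commute)
    finally show ?thesis using part1 by simp
  qed
  have part2: "measure P {\<omega> \<in> space P. Max ((\<lambda>i. V i \<omega>) ` {1..Mv \<omega>}) \<le> x} = H_df j F (u * v) x" for x
  proof -
    have G01: "0 \<le> H_df j F u x" "H_df j F u x \<le> 1" unfolding part1[of x, symmetric] by (simp_all add: prob_le_1)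
    have "measure P {\<omega> \<in> space P. Max ((\<lambda>i. V i \<omega>) ` {1..Mv \<omega>}) \<le> x} = (\<integral>\<omega>. H_df j F u x ^ Mv \<omega> \<partial>P)"
      by (rule max_random[OF assms(1) ind2, where a="None" and b=Some])
         (use VG G01 M0 Mm in \<open>auto simp: inj_on_def\<close>)
    also have "\<dots> = harris_pgf v j (H_df j F u x)" using pgfM G01 by simp
    also have "\<dots> = H_df j F (u * v) x"
    proof -
      have F01: "0 \<le> F x" "F x \<le> 1" unfolding assms(7)[of 1 x, symmetric, simplified] by (simp_all add: prob_le_1)
      show ?thesis unfolding harris_pgf_def H_df_def
        by (rule harris_comp[OF assms(2,3,4) F01])
    qed
    finally show ?thesis .
  qed
  show ?thesis using part1 part2 by blast
qed

end
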